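(* Let $\mathsf C$ be any smooth vector field on $\mathbb R^3$ and $\widetilde\nabla$ the snm-connection determined by $\mathsf C$. Let $M$ be an oriented surface immersed in $\mathbb R^3$ with unit normal $N$, Gaussian curvature $G$ and mean curvature $H$ (with respect to the Euclidean Levi-Civita connection). Then at every point $p\in M$, $$K(p)=\widetilde K(T_pM)+G(p)-\langle \mathsf C(p),N(p)\rangle\, H(p).$$
   Context: Let $\langle\cdot,\cdot\rangle$ be the Euclidean metric on $\mathbb R^3$ and $\widetilde\nabla^0$ its Levi-Civita connection (the ordinary directional derivative). Given a smooth vector field $\mathsf C$ on $\mathbb R^3$, the semi-symmetric non-metric connection (snm-connection) determined by $\mathsf C$ is $\widetilde\nabla_XY=\widetilde\nabla^0_XY+\langle \mathsf C,Y\rangle X$. Its curvature tensor is $\widetilde R(X,Y)Z=\widetilde\nabla_X\widetilde\nabla_YZ-\widetilde\nabla_Y\widetilde\nabla_XZ-\widetilde\nabla_{[X,Y]}Z$. For a $2$-dimensional subspace $\pi\subset T_p\mathbb R^3$ with orthonormal basis $\{e_1,e_2\}$, its sectional curvature with respect to $\widetilde\nabla$ is $\widetilde K(\pi)=\frac12\big(\langle\widetilde R(e_1,e_2)e_2,e_1\rangle+\langle\widetilde R(e_2,e_1)e_1,e_2\rangle\big)$ (independent of the orthonormal basis). For a surface $M$ immersed in $\mathbb R^3$, the induced connection is $\nabla_XY=(\widetilde\nabla_XY)^{\top}$ (tangential component) for tangent vector fields $X,Y$, with curvature tensor $R$ defined by the same formula as $\widetilde R$, and the sectional curvature of $M$ with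 respect to $\widetilde\nabla$ at $p$ is $K(p)=\frac12\big(\langle R(e_1,e_2)e_2,e_1\rangle+\langle R(e_2,e_1)e_1,e_2\rangle\big)$ for an orthonormal basis $\{e_1,e_2\}$ of $T_pM$. The second fundamental form is $h(X,Y)=\langle\widetilde\nabla^0_XY,N\rangle$; $G$ is the determinant and $H$ is one half of the trace of the associated shape operator. *)

theory Defs
  imports "HOL-Analysis.Analysis"
begin

type_synonym R3 = "real^3"
type_synonym R2 = "real^2"

fun Ck_on :: "nat \<Rightarrow> 'a::euclidean_space set \<Rightarrow> ('a \<Rightarrow> 'b::euclidean_space) \<Rightarrow> bool" where
  "Ck_on 0 S f = continuous_on S f"
| "Ck_on (Suc k) S f = ((\<forall>x\<in>S. f differentiable (at x)) \<and>
      (\<forall>v. Ck_on k S (\<lambda>x. frechet_derivative f (at x) v)))"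

definition smooth_on :: "'a::euclidean_space set \<Rightarrow> ('a \<Rightarrow> 'b::euclidean_space) \<Rightarrow> bool" where
  "smooth_on S f = (\<forall>k. Ck_on k S f)"

definition flat_conn :: "(R3 \<Rightarrow> R3) \<Rightarrow> (R3 \<Rightarrow> R3) \<Rightarrow> R3 \<Rightarrow> R3" where
  "flat_conn X Y = (\<lambda>p. frechet_derivative Y (at p) (X p))"

definition snm_conn :: "(R3 \<Rightarrow> R3) \<Rightarrow> (R3 \<Rightarrow> R3) \<Rightarrow> (R3 \<Rightarrow> R3) \<Rightarrow> R3 \<Rightarrow> R3" where
  "snm_conn C X Y = (\<lambda>p. flat_conn X Y p + (C p \<bullet> Y p) *\<^sub>R X p)"

definition lie_amb :: "(R3 \<Rightarrow> R3) \<Rightarrow> (R3 \<Rightarrow> R3) \<Rightarrow> R3 \<Rightarrow> R3" where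
  "lie_amb X Y = (\<lambda>p. flat_conn X Y p - flat_conn Y X p)"

definition curv_amb :: "(R3 \<Rightarrow> R3) \<Rightarrow> (R3 \<Rightarrow> R3) \<Rightarrow> (R3 \<Rightarrow> R3) \<Rightarrow> (R3 \<Rightarrow> R3) \<Rightarrow> R3 \<Rightarrow> R3" where
  "curv_amb C X Y Z = (\<lambda>p. snm_conn C X (snm_conn C Y Z) p - snm_conn C Y (snm_conn C X Z) p
                          - snm_conn C (lie_amb X Y) Z p)"

text \<open>Sectional curvature of the plane spanned by X1 p, X2 p (an orthonormal pair),
  computed from vector fields X1, X2 extending the basis vectors.\<close>
definition sec_amb :: "(R3 \<Rightarrow> R3) \<Rightarrow> (R3 \<Rightarrow> R3) \<Rightarrow> (R3 \<Rightarrow> R3) \<Rightarrow> R3 \<Rightarrow> real" where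
  "sec_amb C X1 X2 p = (curv_amb C X1 X2 X2 p \<bullet> X1 p + curv_amb C X2 X1 X1 p \<bullet> X2 p) / 2"

definition tangent_space :: "(R2 \<Rightarrow> R3) \<Rightarrow> R2 \<Rightarrow> R3 set" where
  "tangent_space f u = range (frechet_derivative f (at u))"

definition tangent_field :: "(R2 \<Rightarrow> R3) \<Rightarrow> R2 set \<Rightarrow> (R2 \<Rightarrow> R3) \<Rightarrow> bool" where
  "tangent_field f U X = (smooth_on U X \<and> (\<forall>u\<in>U. X u \<in> tangent_space f u))"

text \<open>Coordinate vector of a tangent vector v at u (preimage under df_u; unique for an immersion).\<close>
definition coord :: "(R2 \<Rightarrow> R3) \<Rightarrow> R2 \<Rightarrow> R3 \<Rightarrow> R2" where
  "coord f u v = (SOME \<xi>. frechet_derivative f (at u) \<xi> = v)"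

definition flat_surf :: "(R2 \<Rightarrow> R3) \<Rightarrow> (R2 \<Rightarrow> R3) \<Rightarrow> (R2 \<Rightarrow> R3) \<Rightarrow> R2 \<Rightarrow> R3" where
  "flat_surf f X Y = (\<lambda>u. frechet_derivative Y (at u) (coord f u (X u)))"

definition tan_part :: "(R2 \<Rightarrow> R3) \<Rightarrow> R2 \<Rightarrow> R3 \<Rightarrow> R3" where
  "tan_part N u v = v - (v \<bullet> N u) *\<^sub>R N u"

definition ind_conn :: "(R3 \<Rightarrow> R3) \<Rightarrow> (R2 \<Rightarrow> R3) \<Rightarrow> (R2 \<Rightarrow> R3) \<Rightarrow> (R2 \<Rightarrow> R3) \<Rightarrow> (R2 \<Rightarrow> R3) \<Rightarrow> R2 \<Rightarrow> R3" where
  "ind_conn C f N X Y = (\<lambda>u. tan_part N u (flat_surf f X Y u + (C (f u) \<bullet> Y u) *\<^sub>R X u))"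

definition lie_surf :: "(R2 \<Rightarrow> R3) \<Rightarrow> (R2 \<Rightarrow> R3) \<Rightarrow> (R2 \<Rightarrow> R3) \<Rightarrow> R2 \<Rightarrow> R3" where
  "lie_surf f X Y = (\<lambda>u. flat_surf f X Y u - flat_surf f Y X u)"

definition curv_surf :: "(R3 \<Rightarrow> R3) \<Rightarrow> (R2 \<Rightarrow> R3) \<Rightarrow> (R2 \<Rightarrow> R3) \<Rightarrow>
    (R2 \<Rightarrow> R3) \<Rightarrow> (R2 \<Rightarrow> R3) \<Rightarrow> (R2 \<Rightarrow> R3) \<Rightarrow> R2 \<Rightarrow> R3" where
  "curv_surf C f N X Y Z = (\<lambda>u. ind_conn C f N X (ind_conn C f N Y Z) u
       - ind_conn C f N Y (ind_conn C f N X Z) u - ind_conn C f N (lie_surf f X Y) Z u)"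

definition sec_surf :: "(R3 \<Rightarrow> R3) \<Rightarrow> (R2 \<Rightarrow> R3) \<Rightarrow> (R2 \<Rightarrow> R3) \<Rightarrow> (R2 \<Rightarrow> R3) \<Rightarrow> (R2 \<Rightarrow> R3) \<Rightarrow> R2 \<Rightarrow> real" where
  "sec_surf C f N E1 E2 u = (curv_surf C f N E1 E2 E2 u \<bullet> E1 u + curv_surf C f N E2 E1 E1 u \<bullet> E2 u) / 2"

definition sff :: "(R2 \<Rightarrow> R3) \<Rightarrow> (R2 \<Rightarrow> R3) \<Rightarrow> (R2 \<Rightarrow> R3) \<Rightarrow> (R2 \<Rightarrow> R3) \<Rightarrow> R2 \<Rightarrow> real" where
  "sff f N X Y u = flat_surf f X Y u \<bullet> N u"

text \<open>Value of h on tangent vectors v, w at u, using the coordinate extension of w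
  (the tangent field x \<mapsto> df_x (coord w)); h is tensorial so the choice is immaterial.\<close>
definition sff_vec :: "(R2 \<Rightarrow> R3) \<Rightarrow> (R2 \<Rightarrow> R3) \<Rightarrow> R2 \<Rightarrow> R3 \<Rightarrow> R3 \<Rightarrow> real" where
  "sff_vec f N u v w = sff f N (\<lambda>x. frechet_derivative f (at x) (coord f u v))
                                (\<lambda>x. frechet_derivative f (at x) (coord f u w)) u"

definition onb_tangent :: "(R2 \<Rightarrow> R3) \<Rightarrow> R2 \<Rightarrow> R3 \<Rightarrow> R3 \<Rightarrow> bool" where
  "onb_tangent f u e1 e2 = (e1 \<in> tangent_space f u \<and> e2 \<in> tangent_space f u \<and>
      norm e1 = 1 \<and> norm e2 = 1 \<and> e1 \<bullet> e2 = 0)"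

text \<open>Gaussian curvature = determinant, mean curvature = half the trace of the shape operator,
  computed from its matrix (h(e_i,e_j)) in an orthonormal basis of T_pM.\<close>
definition gauss_curv :: "(R2 \<Rightarrow> R3) \<Rightarrow> (R2 \<Rightarrow> R3) \<Rightarrow> R2 \<Rightarrow> real" where
  "gauss_curv f N u = (let (e1, e2) = (SOME (e1, e2). onb_tangent f u e1 e2) in
      sff_vec f N u e1 e1 * sff_vec f N u e2 e2 - sff_vec f N u e1 e2 * sff_vec f N u e2 e1)"

definition mean_curv :: "(R2 \<Rightarrow> R3) \<Rightarrow> (R2 \<Rightarrow> R3) \<Rightarrow> R2 \<Rightarrow> real" where
  "mean_curv f N u = (let (e1, e2) = (SOME (e1, e2). onb_tangent f u e1 e2) in
      (sff_vec f N u e1 e1 + sff_vec f N u e2 e2) / 2)"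

end

theory Submission
  imports Defs
begin


lemma smooth_diff: "smooth_on S f \<Longrightarrow> x \<in> S \<Longrightarrow> f differentiable (at x)"
  unfolding smooth_on_def by (metis Ck_on.simps(2))

lemma smooth_der: "smooth_on S f \<Longrightarrow> smooth_on S (\<lambda>x. frechet_derivative f (at x) v)"
  unfolding smooth_on_def by (metis Ck_on.simps(2))

lemma smooth_cont: "smooth_on S f \<Longrightarrow> continuous_on S f"
  unfolding smooth_on_def by (metis Ck_on.simps(1))

lemma smooth_hd: "smooth_on S f \<Longrightarrow> x \<in> S \<Longrightarrow> (f has_derivative frechet_derivative f (at x)) (at x)"
  using smooth_diff frechet_derivative_works by blast

lemma smooth_lin: "smooth_on S f \<Longrightarrow> x \<in> S \<Longrightarrow> linear (frechet_derivative f (at x))"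
  using smooth_hd has_derivative_linear by blast

lemma line_mvt:
  fixes K :: "'a::real_normed_vector \<Rightarrow> 'b::real_inner"
  assumes h: "0 < h" and d: "\<And>t. t \<in> {0..h} \<Longrightarrow> (K has_derivative K' t) (at (q + t *\<^sub>R d))"
  shows "\<exists>\<tau>. 0 < \<tau> \<and> \<tau> < h \<and> K (q + h *\<^sub>R d) \<bullet> w - K q \<bullet> w = h * (K' \<tau> d \<bullet> w)"
proof -
  have "\<And>t. 0 \<le> t \<Longrightarrow> t \<le> h \<Longrightarrow> ((\<lambda>t. K (q + t *\<^sub>R d) \<bullet> w) has_real_derivative (K' t d \<bullet> w)) (at t)"
  proof -
    fix t :: real assume t: "0 \<le> t" "t \<le> h"
    have l: "linear (K' t)" using d[of t] t has_derivative_linear by auto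
    have "((\<lambda>t. q + t *\<^sub>R d) has_derivative (\<lambda>s. s *\<^sub>R d)) (at t)" by (auto intro!: derivative_eq_intros)
    from has_derivative_compose[OF this d[of t]] t
    have "((\<lambda>t. K (q + t *\<^sub>R d)) has_derivative (\<lambda>s. K' t (s *\<^sub>R d))) (at t)" by auto
    then have "((\<lambda>t. K (q + t *\<^sub>R d) \<bullet> w) has_derivative (\<lambda>s. K' t (s *\<^sub>R d) \<bullet> w)) (at t)"
      by (rule has_derivative_inner_left)
    then show "((\<lambda>t. K (q + t *\<^sub>R d) \<bullet> w) has_real_derivative (K' t d \<bullet> w)) (at t)"
      by (rule has_derivative_imp_has_field_derivative) (simp add: linear_cmul[OF l])
  qed
  from MVT2[OF h this] obtain z where "0 < z" "z < h"
     "K (q + h *\<^sub>R d) \<bullet> w - K (q + 0 *\<^sub>R d) \<bullet> w = (h - 0) * (K' z d \<bullet> w)" by blast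
  then show ?thesis by auto
qed

lemma smooth_shift_hd:
  assumes sm: "smooth_on S F" and x: "x + c \<in> S"
  shows "((\<lambda>y. F (y + c)) has_derivative frechet_derivative F (at (x + c))) (at x)"
proof -
  have "((\<lambda>y. y + c) has_derivative (\<lambda>v. v)) (at x)" by (auto intro!: derivative_eq_intros)
  from has_derivative_compose[OF this smooth_hd[OF sm x]] show ?thesis by simp
qed

lemma Delta_lemma:
  fixes F :: "'a::euclidean_space \<Rightarrow> 'b::euclidean_space"
  assumes sm: "smooth_on S F" and bS: "ball p r \<subseteq> S" and h: "0 < h" and hr: "h * (norm a + norm b) < r"
  shows "\<exists>s t. 0 < s \<and> s < h \<and> 0 < t \<and> t < h \<and>
    (F (p + h *\<^sub>R a + h *\<^sub>R b) - F (p + h *\<^sub>R a) - F (p + h *\<^sub>R b) + F p) \<bullet> w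
      = h * h * (frechet_derivative (\<lambda>x. frechet_derivative F (at x) a) (at (p + s *\<^sub>R a + t *\<^sub>R b)) b \<bullet> w)"
proof -
  have inS: "p + s *\<^sub>R a + t *\<^sub>R b \<in> S" if "0 \<le> s" "s \<le> h" "0 \<le> t" "t \<le> h" for s t
  proof -
    have "norm (s *\<^sub>R a + t *\<^sub>R b) \<le> s * norm a + t * norm b"
      using norm_triangle_ineq[of "s *\<^sub>R a" "t *\<^sub>R b"] that by simp
    also have "\<dots> \<le> h * norm a + h * norm b"
      using that by (intro add_mono mult_right_mono) auto
    finally have "norm (s *\<^sub>R a + t *\<^sub>R b) < r" using hr by (simp add: algebra_simps)
    moreover have "dist p (p + s *\<^sub>R a + t *\<^sub>R b) = norm (s *\<^sub>R a + t *\<^sub>R b)"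
      by (metis add.assoc add_diff_cancel_left' dist_norm norm_minus_commute)
    ultimately have "p + s *\<^sub>R a + t *\<^sub>R b \<in> ball p r" by simp
    then show ?thesis using bS by auto
  qed
  define K1 where "K1 = (\<lambda>x. F (x + h *\<^sub>R b) - F x)"
  have "\<exists>\<sigma>. 0 < \<sigma> \<and> \<sigma> < h \<and> K1 (p + h *\<^sub>R a) \<bullet> w - K1 p \<bullet> w =
     h * ((\<lambda>v. frechet_derivative F (at (p + \<sigma> *\<^sub>R a + h *\<^sub>R b)) v - frechet_derivative F (at (p + \<sigma> *\<^sub>R a)) v) a \<bullet> w)"
  proof (rule line_mvt[OF h, where K'="\<lambda>t v. frechet_derivative F (at (p + t *\<^sub>R a + h *\<^sub>R b)) v - frechet_derivative F (at (p + t *\<^sub>R a)) v"])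
    fix t assume t: "t \<in> {0..h}"
    have 1: "p + t *\<^sub>R a + h *\<^sub>R b \<in> S" using inS[of t h] t h by auto
    have 2: "p + t *\<^sub>R a \<in> S" using inS[of t 0] t h by auto
    show "(K1 has_derivative (\<lambda>v. frechet_derivative F (at (p + t *\<^sub>R a + h *\<^sub>R b)) v - frechet_derivative F (at (p + t *\<^sub>R a)) v)) (at (p + t *\<^sub>R a))"
      unfolding K1_def
      by (rule has_derivative_diff[OF smooth_shift_hd[OF sm 1] smooth_hd[OF sm 2]])
  qed
  then obtain \<sigma> where s: "0 < \<sigma>" "\<sigma> < h" and e1: "K1 (p + h *\<^sub>R a) \<bullet> w - K1 p \<bullet> w =
     h * ((frechet_derivative F (at (p + \<sigma> *\<^sub>R a + h *\<^sub>R b)) a - frechet_derivative F (at (p + \<sigma> *\<^sub>R a)) a) \<bullet> w)" by auto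
  define K2 where "K2 = (\<lambda>x. frechet_derivative F (at x) a)"
  have sm2: "smooth_on S K2" unfolding K2_def by (rule smooth_der[OF sm])
  have "\<exists>\<tau>. 0 < \<tau> \<and> \<tau> < h \<and> K2 ((p + \<sigma> *\<^sub>R a) + h *\<^sub>R b) \<bullet> w - K2 (p + \<sigma> *\<^sub>R a) \<bullet> w =
     h * (frechet_derivative K2 (at ((p + \<sigma> *\<^sub>R a) + \<tau> *\<^sub>R b)) b \<bullet> w)"
  proof (rule line_mvt[OF h, where K'="\<lambda>t. frechet_derivative K2 (at (p + \<sigma> *\<^sub>R a + t *\<^sub>R b))"])
    fix t assume t: "t \<in> {0..h}"
    have "p + \<sigma> *\<^sub>R a + t *\<^sub>R b \<in> S" using inS[of \<sigma> t] t s by auto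
    then show "(K2 has_derivative frechet_derivative K2 (at (p + \<sigma> *\<^sub>R a + t *\<^sub>R b))) (at (p + \<sigma> *\<^sub>R a + t *\<^sub>R b))"
      by (rule smooth_hd[OF sm2])
  qed
  then obtain \<tau> where t: "0 < \<tau>" "\<tau> < h" and e2: "K2 ((p + \<sigma> *\<^sub>R a) + h *\<^sub>R b) \<bullet> w - K2 (p + \<sigma> *\<^sub>R a) \<bullet> w =
     h * (frechet_derivative K2 (at ((p + \<sigma> *\<^sub>R a) + \<tau> *\<^sub>R b)) b \<bullet> w)" by auto
  have "(F (p + h *\<^sub>R a + h *\<^sub>R b) - F (p + h *\<^sub>R a) - F (p + h *\<^sub>R b) + F p) \<bullet> w
      = K1 (p + h *\<^sub>R a) \<bullet> w - K1 p \<bullet> w"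
    unfolding K1_def by (simp add: inner_diff_left inner_add_left)
  also have "\<dots> = h * (K2 ((p + \<sigma> *\<^sub>R a) + h *\<^sub>R b) \<bullet> w - K2 (p + \<sigma> *\<^sub>R a) \<bullet> w)"
    unfolding e1 K2_def by (simp add: inner_diff_left)
  also have "\<dots> = h * h * (frechet_derivative K2 (at ((p + \<sigma> *\<^sub>R a) + \<tau> *\<^sub>R b)) b \<bullet> w)"
    unfolding e2 by simp
  finally show ?thesis using s t unfolding K2_def by blast
qed

lemma abs_contra: "\<bar>x - g1\<bar> < e \<Longrightarrow> \<bar>y - g2\<bar> < e \<Longrightarrow> x = y \<Longrightarrow> e = \<bar>g1 - g2\<bar> / 2 \<Longrightarrow> False"
  for x y g1 g2 e :: real by (simp add: abs_if split: if_splits)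

lemma schwarz:
  fixes F :: "'a::euclidean_space \<Rightarrow> 'b::euclidean_space"
  assumes sm: "smooth_on S F" and S: "open S" and p: "p \<in> S"
  shows "frechet_derivative (\<lambda>x. frechet_derivative F (at x) a) (at p) b
       = frechet_derivative (\<lambda>x. frechet_derivative F (at x) b) (at p) a"
proof -
  define G1 where "G1 = (\<lambda>q. frechet_derivative (\<lambda>x. frechet_derivative F (at x) a) (at q) b)"
  define G2 where "G2 = (\<lambda>q. frechet_derivative (\<lambda>x. frechet_derivative F (at x) b) (at q) a)"
  have c1: "isCont G1 p" unfolding G1_def
    using smooth_cont[OF smooth_der[OF smooth_der[OF sm]]] S p continuous_on_eq_continuous_at by blast
  have c2: "isCont G2 p" unfolding G2_def
    using smooth_cont[OF smooth_der[OF smooth_der[OF sm]]] S p continuous_on_eq_continuous_at by blast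
  obtain r where r: "r > 0" "ball p r \<subseteq> S" using S p open_contains_ball by blast
  have "G1 p = G2 p"
  proof (rule euclidean_eqI)
    fix w :: 'b assume w: "w \<in> Basis"
    show "G1 p \<bullet> w = G2 p \<bullet> w"
    proof (rule ccontr)
      assume ne: "G1 p \<bullet> w \<noteq> G2 p \<bullet> w"
      define e where "e = \<bar>G1 p \<bullet> w - G2 p \<bullet> w\<bar> / 2"
      have e: "e > 0" using ne unfolding e_def by auto
      obtain d1 where d1: "d1 > 0" "\<And>x. dist x p < d1 \<Longrightarrow> dist (G1 x) (G1 p) < e"
        using c1 e unfolding continuous_at_eps_delta by blast
      obtain d2 where d2: "d2 > 0" "\<And>x. dist x p < d2 \<Longrightarrow> dist (G2 x) (G2 p) < e"
        using c2 e unfolding continuous_at_eps_delta by blast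
      define m where "m = min r (min d1 d2)"
      have m: "m > 0" using r d1 d2 unfolding m_def by auto
      define h where "h = m / (2 * (norm a + norm b + 1))"
      have hpos: "h > 0" using m unfolding h_def by (auto intro!: divide_pos_pos add_nonneg_pos)
      have hm: "h * (norm a + norm b) < m"
      proof -
        have "h * (norm a + norm b) \<le> h * (norm a + norm b + 1)" using hpos by auto
        also have "\<dots> = m / 2" 
        proof -
          have "norm a + norm b + 1 \<noteq> 0" by (smt (verit) norm_ge_zero)
          then show ?thesis unfolding h_def by (simp add: field_simps)
        qed
        finally show ?thesis using m by auto
      qed
      have near: "dist (p + s *\<^sub>R a + t *\<^sub>R b) p < m" if "0 < s" "s < h" "0 < t" "t < h" for s t
      proof -
        have "norm (s *\<^sub>R a + t *\<^sub>R b) \<le> s * norm a + t * norm b"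
          using norm_triangle_ineq[of "s *\<^sub>R a" "t *\<^sub>R b"] that by simp
        also have "\<dots> \<le> h * norm a + h * norm b"
          using that by (intro add_mono mult_right_mono) auto
        finally show ?thesis using hm by (simp add: dist_norm algebra_simps)
      qed
      from Delta_lemma[OF sm r(2) hpos, of a b w] hm obtain s1 t1 where
        st1: "0 < s1" "s1 < h" "0 < t1" "t1 < h" and
        E1: "(F (p + h *\<^sub>R a + h *\<^sub>R b) - F (p + h *\<^sub>R a) - F (p + h *\<^sub>R b) + F p) \<bullet> w
          = h * h * (G1 (p + s1 *\<^sub>R a + t1 *\<^sub>R b) \<bullet> w)"
        unfolding G1_def m_def by auto
      from Delta_lemma[OF sm r(2) hpos, of b a w] hm obtain s2 t2 where
        st2: "0 < s2" "s2 < h" "0 < t2" "t2 < h" and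
        E2: "(F (p + h *\<^sub>R b + h *\<^sub>R a) - F (p + h *\<^sub>R b) - F (p + h *\<^sub>R a) + F p) \<bullet> w
          = h * h * (G2 (p + s2 *\<^sub>R b + t2 *\<^sub>R a) \<bullet> w)"
        unfolding G2_def m_def by (auto simp: add.commute)
      have "(F (p + h *\<^sub>R b + h *\<^sub>R a) - F (p + h *\<^sub>R b) - F (p + h *\<^sub>R a) + F p)
          = (F (p + h *\<^sub>R a + h *\<^sub>R b) - F (p + h *\<^sub>R a) - F (p + h *\<^sub>R b) + F p)"
        by (simp add: algebra_simps)
      with E1 E2 hpos have eq: "G1 (p + s1 *\<^sub>R a + t1 *\<^sub>R b) \<bullet> w = G2 (p + s2 *\<^sub>R b + t2 *\<^sub>R a) \<bullet> w"
        by auto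
      have n1: "dist (p + s1 *\<^sub>R a + t1 *\<^sub>R b) p < d1" using near[OF st1] unfolding m_def by auto
      have n2: "dist (p + t2 *\<^sub>R a + s2 *\<^sub>R b) p < d2" using near[OF st2(3,4,1,2)] unfolding m_def by auto
      have q2: "p + s2 *\<^sub>R b + t2 *\<^sub>R a = p + t2 *\<^sub>R a + s2 *\<^sub>R b" by (simp add: algebra_simps)
      have wn: "norm w = 1" using w by auto
      have i1: "\<bar>G1 (p + s1 *\<^sub>R a + t1 *\<^sub>R b) \<bullet> w - G1 p \<bullet> w\<bar> < e"
        using d1(2)[OF n1] Cauchy_Schwarz_ineq2[of "G1 (p + s1 *\<^sub>R a + t1 *\<^sub>R b) - G1 p" w] wn
        by (simp add: dist_norm inner_diff_left)
      have i2: "\<bar>G2 (p + t2 *\<^sub>R a + s2 *\<^sub>R b) \<bullet> w - G2 p \<bullet> w\<bar> < e"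
        using d2(2)[OF n2] Cauchy_Schwarz_ineq2[of "G2 (p + t2 *\<^sub>R a + s2 *\<^sub>R b) - G2 p" w] wn
        by (simp add: dist_norm inner_diff_left)
      have eq': "G1 (p + s1 *\<^sub>R a + t1 *\<^sub>R b) \<bullet> w = G2 (p + t2 *\<^sub>R a + s2 *\<^sub>R b) \<bullet> w"
        using eq q2 by simp
      show False using abs_contra[OF i1 i2 eq' e_def] .
    qed
  qed
  then show ?thesis unfolding G1_def G2_def .
qed



lemma fd_repr:
  assumes "smooth_on S F" "q \<in> S"
  shows "frechet_derivative F (at q) v = (\<Sum>i\<in>Basis. (v \<bullet> i) *\<^sub>R frechet_derivative F (at q) i)"
proof -
  have l: "linear (frechet_derivative F (at q))" using smooth_lin assms by blast
  have "frechet_derivative F (at q) v = frechet_derivative F (at q) (\<Sum>i\<in>Basis. (v \<bullet> i) *\<^sub>R i)"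
    by (simp add: euclidean_representation)
  also have "\<dots> = (\<Sum>i\<in>Basis. (v \<bullet> i) *\<^sub>R frechet_derivative F (at q) i)"
    by (simp add: linear_sum[OF l] linear_cmul[OF l])
  finally show ?thesis .
qed

lemma fd_repr':
  assumes "smooth_on S F" "q \<in> S"
  shows "(\<Sum>i\<in>Basis. (v \<bullet> i) *\<^sub>R frechet_derivative F (at q) i) = frechet_derivative F (at q) v"
  using fd_repr[OF assms, of v] by (rule sym)

lemma D2_hd:
  assumes sm: "smooth_on S F" and S: "open S" and p: "p \<in> S"
  shows "((\<lambda>q. frechet_derivative F (at q) v) has_derivative
          (\<lambda>h. \<Sum>i\<in>Basis. (v \<bullet> i) *\<^sub>R frechet_derivative (\<lambda>q. frechet_derivative F (at q) i) (at p) h)) (at p)"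
proof -
  have "((\<lambda>q. \<Sum>i\<in>Basis. (v \<bullet> i) *\<^sub>R frechet_derivative F (at q) i) has_derivative
          (\<lambda>h. \<Sum>i\<in>Basis. (v \<bullet> i) *\<^sub>R frechet_derivative (\<lambda>q. frechet_derivative F (at q) i) (at p) h)) (at p)"
    by (intro has_derivative_sum has_derivative_scaleR_right smooth_hd[OF smooth_der[OF sm] p])
  then show ?thesis
    by (rule has_derivative_transform_within_open[OF _ S p]) (rule fd_repr'[OF sm])
qed

lemma D2_lin:
  assumes sm: "smooth_on S F" and S: "open S" and p: "p \<in> S"
  shows "frechet_derivative (\<lambda>q. frechet_derivative F (at q) v) (at p) h
       = (\<Sum>i\<in>Basis. (v \<bullet> i) *\<^sub>R frechet_derivative (\<lambda>q. frechet_derivative F (at q) i) (at p) h)"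
proof -
  have e: "(\<lambda>h. \<Sum>i\<in>Basis. (v \<bullet> i) *\<^sub>R frechet_derivative (\<lambda>q. frechet_derivative F (at q) i) (at p) h)
     = frechet_derivative (\<lambda>q. frechet_derivative F (at q) v) (at p)"
    by (rule frechet_derivative_at[OF D2_hd[OF assms]])
  show ?thesis by (simp only: e[symmetric])
qed

lemma apply_hd:
  assumes sm: "smooth_on S F" and S: "open S" and p: "p \<in> S" and V: "(V has_derivative V') (at p)"
  shows "((\<lambda>q. frechet_derivative F (at q) (V q)) has_derivative
     (\<lambda>h. frechet_derivative F (at p) (V' h) + frechet_derivative (\<lambda>q. frechet_derivative F (at q) (V p)) (at p) h)) (at p)"
proof -
  have "((\<lambda>q. \<Sum>i\<in>Basis. (V q \<bullet> i) *\<^sub>R frechet_derivative F (at q) i) has_derivative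
     (\<lambda>h. \<Sum>i\<in>Basis. (V p \<bullet> i) *\<^sub>R frechet_derivative (\<lambda>q. frechet_derivative F (at q) i) (at p) h
             + (V' h \<bullet> i) *\<^sub>R frechet_derivative F (at p) i)) (at p)"
  proof (rule has_derivative_sum)
    fix i :: 'a
    have a: "((\<lambda>q. V q \<bullet> i) has_derivative (\<lambda>h. V' h \<bullet> i)) (at p)"
      by (rule has_derivative_inner_left[OF V])
    have b: "((\<lambda>q. frechet_derivative F (at q) i) has_derivative frechet_derivative (\<lambda>q. frechet_derivative F (at q) i) (at p)) (at p)"
      by (rule smooth_hd[OF smooth_der[OF sm] p])
    show "((\<lambda>q. (V q \<bullet> i) *\<^sub>R frechet_derivative F (at q) i) has_derivative
     (\<lambda>h. (V p \<bullet> i) *\<^sub>R frechet_derivative (\<lambda>q. frechet_derivative F (at q) i) (at p) h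
             + (V' h \<bullet> i) *\<^sub>R frechet_derivative F (at p) i)) (at p)"
      using has_derivative_scaleR[OF a b] .
  qed
  then have "((\<lambda>q. frechet_derivative F (at q) (V q)) has_derivative
     (\<lambda>h. \<Sum>i\<in>Basis. (V p \<bullet> i) *\<^sub>R frechet_derivative (\<lambda>q. frechet_derivative F (at q) i) (at p) h
             + (V' h \<bullet> i) *\<^sub>R frechet_derivative F (at p) i)) (at p)"
    by (rule has_derivative_transform_within_open[OF _ S p]) (rule fd_repr'[OF sm])
  note hd = this
  show ?thesis
  proof (rule has_derivative_eq_rhs[OF hd], rule ext)
    fix h
    have 1: "frechet_derivative F (at p) (V' h) = (\<Sum>i\<in>Basis. (V' h \<bullet> i) *\<^sub>R frechet_derivative F (at p) i)"
      by (rule fd_repr[OF sm p])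
    show "(\<Sum>i\<in>Basis. (V p \<bullet> i) *\<^sub>R frechet_derivative (\<lambda>q. frechet_derivative F (at q) i) (at p) h
             + (V' h \<bullet> i) *\<^sub>R frechet_derivative F (at p) i) = 
       frechet_derivative F (at p) (V' h) + frechet_derivative (\<lambda>q. frechet_derivative F (at q) (V p)) (at p) h"
      unfolding 1 D2_lin[OF sm S p, of "V p" h] sum.distrib by (rule add.commute)
  qed
qed



lemma snm_hd:
  assumes C: "smooth_on UNIV C" and Y: "smooth_on UNIV Y" and Z: "smooth_on UNIV Z"
  shows "(snm_conn C Y Z has_derivative (\<lambda>h. (frechet_derivative Z (at p) (frechet_derivative Y (at p) h)
      + frechet_derivative (\<lambda>q. frechet_derivative Z (at q) (Y p)) (at p) h)
      + ((C p \<bullet> Z p) *\<^sub>R frechet_derivative Y (at p) h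
         + (C p \<bullet> frechet_derivative Z (at p) h + frechet_derivative C (at p) h \<bullet> Z p) *\<^sub>R Y p))) (at p)"
proof -
  have 1: "((\<lambda>q. frechet_derivative Z (at q) (Y q)) has_derivative (\<lambda>h. frechet_derivative Z (at p) (frechet_derivative Y (at p) h)
      + frechet_derivative (\<lambda>q. frechet_derivative Z (at q) (Y p)) (at p) h)) (at p)"
    by (rule apply_hd[OF Z open_UNIV UNIV_I smooth_hd[OF Y UNIV_I]])
  have 2: "((\<lambda>q. C q \<bullet> Z q) has_derivative (\<lambda>h. C p \<bullet> frechet_derivative Z (at p) h + frechet_derivative C (at p) h \<bullet> Z p)) (at p)"
    by (rule has_derivative_inner[OF smooth_hd[OF C UNIV_I] smooth_hd[OF Z UNIV_I]])
  have 3: "((\<lambda>q. (C q \<bullet> Z q) *\<^sub>R Y q) has_derivative (\<lambda>h. (C p \<bullet> Z p) *\<^sub>R frechet_derivative Y (at p) h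
         + (C p \<bullet> frechet_derivative Z (at p) h + frechet_derivative C (at p) h \<bullet> Z p) *\<^sub>R Y p)) (at p)"
    by (rule has_derivative_scaleR[OF 2 smooth_hd[OF Y UNIV_I]])
  show ?thesis unfolding snm_conn_def flat_conn_def
    by (rule has_derivative_add[OF 1 3])
qed

lemma snm_fd:
  assumes C: "smooth_on UNIV C" and Y: "smooth_on UNIV Y" and Z: "smooth_on UNIV Z"
  shows "frechet_derivative (snm_conn C Y Z) (at p) h = (frechet_derivative Z (at p) (frechet_derivative Y (at p) h)
      + frechet_derivative (\<lambda>q. frechet_derivative Z (at q) (Y p)) (at p) h)
      + ((C p \<bullet> Z p) *\<^sub>R frechet_derivative Y (at p) h
         + (C p \<bullet> frechet_derivative Z (at p) h + frechet_derivative C (at p) h \<bullet> Z p) *\<^sub>R Y p)"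
  using frechet_derivative_at[OF snm_hd[OF assms, of p]] by (rule fun_cong[OF sym])

lemma curv_amb_eq:
  assumes C: "smooth_on UNIV C" and X: "smooth_on UNIV X" and Y: "smooth_on UNIV Y" and Z: "smooth_on UNIV Z"
  shows "curv_amb C X Y Z p =
     (frechet_derivative C (at p) (X p) \<bullet> Z p - (C p \<bullet> X p) * (C p \<bullet> Z p)) *\<^sub>R Y p
   - (frechet_derivative C (at p) (Y p) \<bullet> Z p - (C p \<bullet> Y p) * (C p \<bullet> Z p)) *\<^sub>R X p"
proof -
  have sw: "frechet_derivative (\<lambda>q. frechet_derivative Z (at q) (Y p)) (at p) (X p)
          = frechet_derivative (\<lambda>q. frechet_derivative Z (at q) (X p)) (at p) (Y p)"
    by (rule schwarz[OF Z open_UNIV UNIV_I])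
  have lz: "linear (frechet_derivative Z (at p))" by (rule smooth_lin[OF Z UNIV_I])
  have e: "\<And>A W. snm_conn C A W p = frechet_derivative W (at p) (A p) + (C p \<bullet> W p) *\<^sub>R A p"
    by (simp add: snm_conn_def flat_conn_def)
  show ?thesis
    unfolding curv_amb_def e snm_fd[OF C Y Z] snm_fd[OF C X Z]
    unfolding snm_conn_def lie_amb_def flat_conn_def sw linear_diff[OF lz]
    by (simp add: algebra_simps inner_add_right inner_add_left inner_diff_left inner_diff_right)
qed



lemma vec2_repr: "(x::real^2) = (x$1) *\<^sub>R axis 1 1 + (x$2) *\<^sub>R axis 2 1"
  by (simp add: vec_eq_iff forall_2 axis_def)

locale surf =
  fixes C :: "R3 \<Rightarrow> R3" and f N :: "R2 \<Rightarrow> R3" and U :: "R2 set" and u0 :: R2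
  assumes C_smooth: "smooth_on UNIV C"
    and U_open: "open U"
    and f_smooth: "smooth_on U f"
    and f_imm: "\<forall>u\<in>U. inj (frechet_derivative f (at u))"
    and N_smooth: "smooth_on U N"
    and N_unit: "\<forall>u\<in>U. norm (N u) = 1"
    and N_normal: "\<forall>u\<in>U. \<forall>v\<in>tangent_space f u. v \<bullet> N u = 0"
    and u0: "u0 \<in> U"
begin

lemma flin: "u \<in> U \<Longrightarrow> linear (frechet_derivative f (at u))"
  by (rule smooth_lin[OF f_smooth])

lemma coord_fd: "u \<in> U \<Longrightarrow> coord f u (frechet_derivative f (at u) \<xi>) = \<xi>"
  unfolding coord_def
proof -
  assume u: "u \<in> U"
  have "frechet_derivative f (at u) (SOME \<xi>'. frechet_derivative f (at u) \<xi>' = frechet_derivative f (at u) \<xi>) = frechet_derivative f (at u) \<xi>"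
    by (rule someI[of _ \<xi>]) simp
  then show "(SOME \<xi>'. frechet_derivative f (at u) \<xi>' = frechet_derivative f (at u) \<xi>) = \<xi>"
    using f_imm u by (meson injD)
qed

lemma fd_coord: "u \<in> U \<Longrightarrow> v \<in> tangent_space f u \<Longrightarrow> frechet_derivative f (at u) (coord f u v) = v"
  unfolding tangent_space_def by (auto simp: coord_fd)

lemma tangent_fd: "frechet_derivative f (at u) \<xi> \<in> tangent_space f u"
  unfolding tangent_space_def by auto

definition "fa u = frechet_derivative f (at u) (axis 1 1)"
definition "fb u = frechet_derivative f (at u) (axis 2 1)"
definition "gram u = (fa u \<bullet> fa u) * (fb u \<bullet> fb u) - (fa u \<bullet> fb u)^2"

lemma fd_ab: "u \<in> U \<Longrightarrow> frechet_derivative f (at u) \<xi> = (\<xi>$1) *\<^sub>R fa u + (\<xi>$2) *\<^sub>R fb u"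
proof -
  assume u: "u \<in> U"
  note l = flin[OF u]
  have "frechet_derivative f (at u) \<xi> = frechet_derivative f (at u) ((\<xi>$1) *\<^sub>R axis 1 1 + (\<xi>$2) *\<^sub>R axis 2 1)"
    using vec2_repr by metis
  then show ?thesis unfolding fa_def fb_def by (simp add: linear_add[OF l] linear_cmul[OF l])
qed

lemma gram_nz: "u \<in> U \<Longrightarrow> gram u \<noteq> 0"
proof
  assume u: "u \<in> U" and g: "gram u = 0"
  define w where "w = (fb u \<bullet> fb u) *\<^sub>R fa u - (fa u \<bullet> fb u) *\<^sub>R fb u"
  have "w \<bullet> w = (fb u \<bullet> fb u) * gram u"
    unfolding w_def gram_def by (simp add: inner_diff_left inner_diff_right algebra_simps power2_eq_square inner_commute)
  then have "w = 0" using g by simp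
  moreover have "w = frechet_derivative f (at u) (vector [fb u \<bullet> fb u, - (fa u \<bullet> fb u)])"
    unfolding fd_ab[OF u] w_def by simp
  ultimately have "vector [fb u \<bullet> fb u, - (fa u \<bullet> fb u)] = (0::real^2)"
    using f_imm u linear_injective_0[OF flin[OF u]] by auto
  then have "fb u \<bullet> fb u = 0" by (metis vector_2(1) zero_index)
  then have "frechet_derivative f (at u) (axis 2 1) = 0" unfolding fb_def by simp
  then have "axis 2 1 = (0::real^2)" using f_imm u linear_injective_0[OF flin[OF u]] by auto
  then show False by (simp add: axis_eq_0_iff)
qed

lemma coord_formula:
  assumes u: "u \<in> U" and v: "v \<in> tangent_space f u"
  shows "coord f u v = (((v \<bullet> fa u) * (fb u \<bullet> fb u) - (v \<bullet> fb u) * (fa u \<bullet> fb u)) / gram u) *\<^sub>R axis 1 1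
           + (((v \<bullet> fb u) * (fa u \<bullet> fa u) - (v \<bullet> fa u) * (fa u \<bullet> fb u)) / gram u) *\<^sub>R axis 2 1"
proof -
  define \<xi> where "\<xi> = coord f u v"
  have e: "v = (\<xi>$1) *\<^sub>R fa u + (\<xi>$2) *\<^sub>R fb u" using fd_coord[OF u v] fd_ab[OF u] unfolding \<xi>_def by metis
  have g: "gram u \<noteq> 0" by (rule gram_nz[OF u])
  have 1: "((v \<bullet> fa u) * (fb u \<bullet> fb u) - (v \<bullet> fb u) * (fa u \<bullet> fb u)) / gram u = \<xi>$1"
    using g unfolding e gram_def
    by (simp add: field_simps inner_add_left inner_commute power2_eq_square) (simp add: algebra_simps inner_commute)
  have 2: "((v \<bullet> fb u) * (fa u \<bullet> fa u) - (v \<bullet> fa u) * (fa u \<bullet> fb u)) / gram u = \<xi>$2"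
    using g unfolding e gram_def
    by (simp add: field_simps inner_add_left inner_commute power2_eq_square) (simp add: algebra_simps inner_commute)
  show ?thesis unfolding 1 2 \<xi>_def[symmetric] by (rule vec2_repr)
qed


lemma xi_hd:
  assumes E: "tangent_field f U E" and u: "u \<in> U"
  shows "((\<lambda>u. coord f u (E u)) has_derivative frechet_derivative (\<lambda>u. coord f u (E u)) (at u)) (at u)"
proof -
  have sE: "smooth_on U E" and tE: "\<And>u. u \<in> U \<Longrightarrow> E u \<in> tangent_space f u" using E unfolding tangent_field_def by auto
  define F where "F = (\<lambda>u. (((E u \<bullet> fa u) * (fb u \<bullet> fb u) - (E u \<bullet> fb u) * (fa u \<bullet> fb u)) / gram u) *\<^sub>R axis 1 1
           + (((E u \<bullet> fb u) * (fa u \<bullet> fa u) - (E u \<bullet> fa u) * (fa u \<bullet> fb u)) / gram u) *\<^sub>R (axis 2 1 :: R2))"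
  have da: "fa differentiable (at u)" unfolding fa_def[abs_def] by (rule smooth_diff[OF smooth_der[OF f_smooth] u])
  have db: "fb differentiable (at u)" unfolding fb_def[abs_def] by (rule smooth_diff[OF smooth_der[OF f_smooth] u])
  have dE: "E differentiable (at u)" by (rule smooth_diff[OF sE u])
  have dg: "gram differentiable (at u)" unfolding gram_def[abs_def] using da db by (simp add: power2_eq_square)
  have "F differentiable (at u)" unfolding F_def
    using da db dE dg gram_nz[OF u] by (intro derivative_intros) auto
  then have "(F has_derivative frechet_derivative F (at u)) (at u)" using frechet_derivative_works by blast
  then have "((\<lambda>u. coord f u (E u)) has_derivative frechet_derivative F (at u)) (at u)"
    by (rule has_derivative_transform_within_open[OF _ U_open u]) (simp add: F_def coord_formula tE)
  then show ?thesis using frechet_derivative_at by metis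
qed

definition "Xi E = frechet_derivative (\<lambda>u. coord f u (E u)) (at u0)"

lemma E_hd:
  assumes E: "tangent_field f U E"
  shows "(E has_derivative (\<lambda>h. frechet_derivative f (at u0) (Xi E h)
           + frechet_derivative (\<lambda>q. frechet_derivative f (at q) (coord f u0 (E u0))) (at u0) h)) (at u0)"
proof -
  have tE: "\<And>u. u \<in> U \<Longrightarrow> E u \<in> tangent_space f u" using E unfolding tangent_field_def by auto
  have "((\<lambda>u. frechet_derivative f (at u) (coord f u (E u))) has_derivative (\<lambda>h. frechet_derivative f (at u0) (Xi E h)
           + frechet_derivative (\<lambda>q. frechet_derivative f (at q) (coord f u0 (E u0))) (at u0) h)) (at u0)"
    unfolding Xi_def by (rule apply_hd[OF f_smooth U_open u0 xi_hd[OF E u0]])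
  then show ?thesis
    by (rule has_derivative_transform_within_open[OF _ U_open u0]) (simp add: fd_coord tE)
qed

lemma E_fd:
  assumes E: "tangent_field f U E"
  shows "frechet_derivative E (at u0) h = frechet_derivative f (at u0) (Xi E h)
           + frechet_derivative (\<lambda>q. frechet_derivative f (at q) (coord f u0 (E u0))) (at u0) h"
  using frechet_derivative_at[OF E_hd[OF E]] by (rule fun_cong[OF sym])

lemma NE:
  assumes E: "tangent_field f U E"
  shows "frechet_derivative N (at u0) h \<bullet> E u0 + N u0 \<bullet> frechet_derivative E (at u0) h = 0"
proof -
  have sE: "smooth_on U E" and tE: "\<And>u. u \<in> U \<Longrightarrow> E u \<in> tangent_space f u" using E unfolding tangent_field_def by auto
  have 1: "((\<lambda>u. N u \<bullet> E u) has_derivative (\<lambda>h. N u0 \<bullet> frechet_derivative E (at u0) h + frechet_derivative N (at u0) h \<bullet> E u0)) (at u0)"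
    by (rule has_derivative_inner[OF smooth_hd[OF N_smooth u0] smooth_hd[OF sE u0]])
  have "((\<lambda>u. 0::real) has_derivative (\<lambda>h. 0)) (at u0)" by simp
  then have 2: "((\<lambda>u. N u \<bullet> E u) has_derivative (\<lambda>h. 0)) (at u0)"
    by (rule has_derivative_transform_within_open[OF _ U_open u0]) (metis N_normal tE inner_commute)
  from has_derivative_unique[OF 1 2] show ?thesis by (metis add.commute)
qed

lemma NN: "frechet_derivative N (at u0) h \<bullet> N u0 = 0"
proof -
  have 1: "((\<lambda>u. N u \<bullet> N u) has_derivative (\<lambda>h. N u0 \<bullet> frechet_derivative N (at u0) h + frechet_derivative N (at u0) h \<bullet> N u0)) (at u0)"
    by (rule has_derivative_inner[OF smooth_hd[OF N_smooth u0] smooth_hd[OF N_smooth u0]])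
  have "((\<lambda>u. 1::real) has_derivative (\<lambda>h. 0)) (at u0)" by simp
  then have 2: "((\<lambda>u. N u \<bullet> N u) has_derivative (\<lambda>h. 0)) (at u0)"
    by (rule has_derivative_transform_within_open[OF _ U_open u0]) (metis N_unit norm_eq_1)
  from has_derivative_unique[OF 1 2] have "N u0 \<bullet> frechet_derivative N (at u0) h + frechet_derivative N (at u0) h \<bullet> N u0 = 0" by metis
  then show ?thesis by (simp add: inner_commute)
qed

end


context surf begin

abbreviation "C0 \<equiv> C (f u0)"
abbreviation "DC \<equiv> frechet_derivative C (at (f u0))"
abbreviation "Df \<equiv> frechet_derivative f (at u0)"
abbreviation "DN \<equiv> frechet_derivative N (at u0)"

definition "Vp Y Z h = (frechet_derivative Z (at u0) (Xi Y h)
      + frechet_derivative (\<lambda>q. frechet_derivative Z (at q) (coord f u0 (Y u0))) (at u0) h)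
      + ((C0 \<bullet> Z u0) *\<^sub>R frechet_derivative Y (at u0) h
         + (C0 \<bullet> frechet_derivative Z (at u0) h + DC (Df h) \<bullet> Z u0) *\<^sub>R Y u0)"

definition "V0 Y Z = frechet_derivative Z (at u0) (coord f u0 (Y u0)) + (C0 \<bullet> Z u0) *\<^sub>R Y u0"

lemma ind_hd:
  assumes Y: "tangent_field f U Y" and Z: "tangent_field f U Z"
  shows "(ind_conn C f N Y Z has_derivative (\<lambda>h. Vp Y Z h - ((V0 Y Z \<bullet> N u0) *\<^sub>R DN h
        + (V0 Y Z \<bullet> DN h + Vp Y Z h \<bullet> N u0) *\<^sub>R N u0))) (at u0)"
proof -
  have sY: "smooth_on U Y" using Y unfolding tangent_field_def by auto
  have sZ: "smooth_on U Z" using Z unfolding tangent_field_def by auto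
  have 1: "((\<lambda>u. frechet_derivative Z (at u) (coord f u (Y u))) has_derivative (\<lambda>h. frechet_derivative Z (at u0) (Xi Y h)
      + frechet_derivative (\<lambda>q. frechet_derivative Z (at q) (coord f u0 (Y u0))) (at u0) h)) (at u0)"
    unfolding Xi_def by (rule apply_hd[OF sZ U_open u0 xi_hd[OF Y u0]])
  have cf: "((\<lambda>u. C (f u)) has_derivative (\<lambda>h. DC (Df h))) (at u0)"
    using has_derivative_compose[OF smooth_hd[OF f_smooth u0] smooth_hd[OF C_smooth UNIV_I]] .
  have 2: "((\<lambda>u. C (f u) \<bullet> Z u) has_derivative (\<lambda>h. C0 \<bullet> frechet_derivative Z (at u0) h + DC (Df h) \<bullet> Z u0)) (at u0)"
    by (rule has_derivative_inner[OF cf smooth_hd[OF sZ u0]])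
  have 3: "((\<lambda>u. (C (f u) \<bullet> Z u) *\<^sub>R Y u) has_derivative (\<lambda>h. (C0 \<bullet> Z u0) *\<^sub>R frechet_derivative Y (at u0) h
         + (C0 \<bullet> frechet_derivative Z (at u0) h + DC (Df h) \<bullet> Z u0) *\<^sub>R Y u0)) (at u0)"
    by (rule has_derivative_scaleR[OF 2 smooth_hd[OF sY u0]])
  have V: "((\<lambda>u. frechet_derivative Z (at u) (coord f u (Y u)) + (C (f u) \<bullet> Z u) *\<^sub>R Y u) has_derivative Vp Y Z) (at u0)"
    unfolding Vp_def[abs_def] by (rule has_derivative_add[OF 1 3])
  define V where "V = (\<lambda>u. frechet_derivative Z (at u) (coord f u (Y u)) + (C (f u) \<bullet> Z u) *\<^sub>R Y u)"
  have V0: "V u0 = V0 Y Z" unfolding V_def V0_def ..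
  have Vd: "(V has_derivative Vp Y Z) (at u0)" using V unfolding V_def .
  have 4: "((\<lambda>u. V u \<bullet> N u) has_derivative (\<lambda>h. V u0 \<bullet> DN h + Vp Y Z h \<bullet> N u0)) (at u0)"
    by (rule has_derivative_inner[OF Vd smooth_hd[OF N_smooth u0]])
  have 5: "((\<lambda>u. (V u \<bullet> N u) *\<^sub>R N u) has_derivative (\<lambda>h. (V u0 \<bullet> N u0) *\<^sub>R DN h + (V u0 \<bullet> DN h + Vp Y Z h \<bullet> N u0) *\<^sub>R N u0)) (at u0)"
    by (rule has_derivative_scaleR[OF 4 smooth_hd[OF N_smooth u0]])
  have 6: "((\<lambda>u. V u - (V u \<bullet> N u) *\<^sub>R N u) has_derivative (\<lambda>h. Vp Y Z h - ((V u0 \<bullet> N u0) *\<^sub>R DN h + (V u0 \<bullet> DN h + Vp Y Z h \<bullet> N u0) *\<^sub>R N u0))) (at u0)"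
    by (rule has_derivative_diff[OF Vd 5])
  have e: "ind_conn C f N Y Z = (\<lambda>u. V u - (V u \<bullet> N u) *\<^sub>R N u)"
    unfolding ind_conn_def tan_part_def flat_surf_def V_def ..
  show ?thesis unfolding e using 6 unfolding V0 .
qed

lemma ind_fd:
  assumes Y: "tangent_field f U Y" and Z: "tangent_field f U Z"
  shows "frechet_derivative (ind_conn C f N Y Z) (at u0) h = Vp Y Z h - ((V0 Y Z \<bullet> N u0) *\<^sub>R DN h
        + (V0 Y Z \<bullet> DN h + Vp Y Z h \<bullet> N u0) *\<^sub>R N u0)"
  using frechet_derivative_at[OF ind_hd[OF assms]] by (rule fun_cong[OF sym])


lemma tan_u0: "tangent_field f U E \<Longrightarrow> E u0 \<bullet> N u0 = 0"
  using N_normal u0 unfolding tangent_field_def by auto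

lemma Df_coord: "tangent_field f U E \<Longrightarrow> Df (coord f u0 (E u0)) = E u0"
  using fd_coord u0 unfolding tangent_field_def by auto

lemma curv_surf_inner:
  assumes X: "tangent_field f U X" and Y: "tangent_field f U Y" and Z: "tangent_field f U Z"
    and T: "T \<bullet> N u0 = 0"
  shows "curv_surf C f N X Y Z u0 \<bullet> T =
     (DC (X u0) \<bullet> Z u0 - (C0 \<bullet> X u0) * (C0 \<bullet> Z u0)) * (Y u0 \<bullet> T)
   - (DC (Y u0) \<bullet> Z u0 - (C0 \<bullet> Y u0) * (C0 \<bullet> Z u0)) * (X u0 \<bullet> T)
   - (frechet_derivative Z (at u0) (coord f u0 (Y u0)) \<bullet> N u0) * (DN (coord f u0 (X u0)) \<bullet> T)
   + (frechet_derivative Z (at u0) (coord f u0 (X u0)) \<bullet> N u0) * (DN (coord f u0 (Y u0)) \<bullet> T)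
   - (C0 \<bullet> N u0) * ((frechet_derivative Z (at u0) (coord f u0 (Y u0)) \<bullet> N u0) * (X u0 \<bullet> T)
                     - (frechet_derivative Z (at u0) (coord f u0 (X u0)) \<bullet> N u0) * (Y u0 \<bullet> T))"
proof -
  define x where "x = coord f u0 (X u0)"
  define y where "y = coord f u0 (Y u0)"
  have sZ: "smooth_on U Z" using Z unfolding tangent_field_def by auto
  have lZ: "linear (frechet_derivative Z (at u0))" by (rule smooth_lin[OF sZ u0])
  have lf: "linear Df" by (rule flin[OF u0])
  have Xn: "X u0 \<bullet> N u0 = 0" by (rule tan_u0[OF X])
  have Yn: "Y u0 \<bullet> N u0 = 0" by (rule tan_u0[OF Y])
  have Dx: "Df x = X u0" unfolding x_def by (rule Df_coord[OF X])
  have Dy: "Df y = Y u0" unfolding y_def by (rule Df_coord[OF Y])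
  have swf: "frechet_derivative (\<lambda>q. frechet_derivative f (at q) y) (at u0) x
           = frechet_derivative (\<lambda>q. frechet_derivative f (at q) x) (at u0) y"
    by (rule schwarz[OF f_smooth U_open u0])
  have swZ: "frechet_derivative (\<lambda>q. frechet_derivative Z (at q) y) (at u0) x
           = frechet_derivative (\<lambda>q. frechet_derivative Z (at q) x) (at u0) y"
    by (rule schwarz[OF sZ U_open u0])
  have lie: "lie_surf f X Y u0 = frechet_derivative Y (at u0) x - frechet_derivative X (at u0) y"
    unfolding lie_surf_def flat_surf_def x_def y_def ..
  have lie2: "lie_surf f X Y u0 = Df (Xi Y x - Xi X y)"
    unfolding lie E_fd[OF X] E_fd[OF Y] x_def[symmetric] y_def[symmetric] swf linear_diff[OF lf] by simp
  have clie: "coord f u0 (lie_surf f X Y u0) = Xi Y x - Xi X y"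
    unfolding lie2 by (rule coord_fd[OF u0])
  have e: "\<And>A W. ind_conn C f N A W u0 = tan_part N u0 (frechet_derivative W (at u0) (coord f u0 (A u0)) + (C0 \<bullet> W u0) *\<^sub>R A u0)"
    unfolding ind_conn_def flat_surf_def ..
  have tp: "\<And>v. tan_part N u0 v \<bullet> T = v \<bullet> T"
  proof -
    fix v
    have "N u0 \<bullet> T = 0" using T by (simp add: inner_commute)
    then show "tan_part N u0 v \<bullet> T = v \<bullet> T" unfolding tan_part_def by (simp add: inner_diff_left)
  qed
  have w: "\<And>A B. ind_conn C f N A B u0 = V0 A B - (V0 A B \<bullet> N u0) *\<^sub>R N u0"
    unfolding ind_conn_def tan_part_def flat_surf_def V0_def ..
  have V0n: "\<And>A B. tangent_field f U A \<Longrightarrow> V0 A B \<bullet> N u0 = frechet_derivative B (at u0) (coord f u0 (A u0)) \<bullet> N u0"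
    unfolding V0_def using tan_u0 by (simp add: inner_add_left)
  show ?thesis
    unfolding curv_surf_def inner_diff_left e tp ind_fd[OF Y Z] ind_fd[OF X Z] w V0n[OF X] V0n[OF Y]
    unfolding x_def[symmetric] y_def[symmetric] clie
    unfolding Vp_def V0_def lie Dx Dy swZ linear_diff[OF lZ] x_def[symmetric] y_def[symmetric]
    using Xn Yn T
    by (simp add: tan_part_def algebra_simps inner_add_left inner_add_right inner_diff_left inner_diff_right inner_commute)
qed

end


context surf begin

lemma onb_expand:
  assumes onb: "onb_tangent f u0 a b" and v: "v \<in> tangent_space f u0"
  shows "v = (v \<bullet> a) *\<^sub>R a + (v \<bullet> b) *\<^sub>R b"
proof -
  have a: "a \<in> tangent_space f u0" "norm a = 1" and b: "b \<in> tangent_space f u0" "norm b = 1"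
    and ab: "a \<bullet> b = 0" using onb unfolding onb_tangent_def by auto
  have lf: "linear Df" by (rule flin[OF u0])
  have dT: "dim (tangent_space f u0) = 2"
  proof -
    have "dim (Df ` UNIV) = dim (UNIV :: R2 set)"
      using dim_image_eq[OF lf] f_imm u0 by (metis inj_on_subset subset_UNIV)
    then show ?thesis unfolding tangent_space_def by simp
  qed
  have ne: "a \<noteq> b" using ab a(2) by (metis inner_eq_zero_iff norm_eq_zero zero_neq_one)
  have ind: "independent {a, b}"
    by (rule pairwise_orthogonal_independent)
       (use ab a b ne in \<open>auto simp: pairwise_def orthogonal_def inner_commute\<close>)
  have "tangent_space f u0 \<subseteq> span {a, b}"
    by (rule card_ge_dim_independent) (use a b ind ne dT in auto)
  with v have "v \<in> span {a, b}" by auto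
  then obtain k1 where "v - k1 *\<^sub>R a \<in> span {b}" using span_breakdown_eq by blast
  then obtain k2 where k2: "v - k1 *\<^sub>R a = k2 *\<^sub>R b" unfolding span_singleton by auto
  then have ve: "v = k1 *\<^sub>R a + k2 *\<^sub>R b" by (simp add: algebra_simps)
  have aa: "a \<bullet> a = 1" using a(2) by (simp add: norm_eq_1)
  have bb: "b \<bullet> b = 1" using b(2) by (simp add: norm_eq_1)
  have ba: "b \<bullet> a = 0" using ab by (simp add: inner_commute)
  have "v \<bullet> a = k1 * (a \<bullet> a) + k2 * (b \<bullet> a)" unfolding ve by (simp add: inner_add_left)
  then have "v \<bullet> a = k1" using aa ba by simp
  moreover have "v \<bullet> b = k1 * (a \<bullet> b) + k2 * (b \<bullet> b)" unfolding ve by (simp add: inner_add_left)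
  then have "v \<bullet> b = k2" using bb ab by simp
  ultimately show ?thesis using ve by simp
qed

definition "bf v w = - (DN (coord f u0 v) \<bullet> w)"

lemma coord_lin:
  assumes "a \<in> tangent_space f u0" "b \<in> tangent_space f u0"
  shows "coord f u0 (\<alpha> *\<^sub>R a + \<beta> *\<^sub>R b) = \<alpha> *\<^sub>R coord f u0 a + \<beta> *\<^sub>R coord f u0 b"
proof -
  have lf: "linear Df" by (rule flin[OF u0])
  have "\<alpha> *\<^sub>R a + \<beta> *\<^sub>R b = Df (\<alpha> *\<^sub>R coord f u0 a + \<beta> *\<^sub>R coord f u0 b)"
    by (simp add: linear_add[OF lf] linear_cmul[OF lf] fd_coord[OF u0] assms)
  then show ?thesis using coord_fd[OF u0] by simp
qed

lemma bf_expand: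
  assumes onb: "onb_tangent f u0 a b" and v: "v \<in> tangent_space f u0" and w: "w \<in> tangent_space f u0"
  shows "bf v w = (v \<bullet> a) * (w \<bullet> a) * bf a a + (v \<bullet> a) * (w \<bullet> b) * bf a b
                 + (v \<bullet> b) * (w \<bullet> a) * bf b a + (v \<bullet> b) * (w \<bullet> b) * bf b b"
proof -
  have a: "a \<in> tangent_space f u0" and b: "b \<in> tangent_space f u0" using onb unfolding onb_tangent_def by auto
  have lN: "linear DN" by (rule smooth_lin[OF N_smooth u0])
  have cv: "coord f u0 v = (v \<bullet> a) *\<^sub>R coord f u0 a + (v \<bullet> b) *\<^sub>R coord f u0 b"
    using coord_lin[OF a b] onb_expand[OF onb v] by metis
  have we: "w = (w \<bullet> a) *\<^sub>R a + (w \<bullet> b) *\<^sub>R b" by (rule onb_expand[OF onb w])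
  show ?thesis unfolding bf_def cv
    apply (subst (1) we)
    by (simp add: linear_add[OF lN] linear_cmul[OF lN] inner_add_left inner_add_right algebra_simps)
qed

lemma sff_vec_bf:
  assumes v: "v \<in> tangent_space f u0" and w: "w \<in> tangent_space f u0"
  shows "sff_vec f N u0 v w = bf v w"
proof -
  define W where "W = (\<lambda>x. frechet_derivative f (at x) (coord f u0 w))"
  have tW: "tangent_field f U W" unfolding tangent_field_def W_def
    using smooth_der[OF f_smooth] tangent_fd by auto
  have W0: "W u0 = w" unfolding W_def by (rule fd_coord[OF u0 w])
  have c: "coord f u0 (Df (coord f u0 v)) = coord f u0 v" by (rule coord_fd[OF u0])
  have "sff_vec f N u0 v w = frechet_derivative W (at u0) (coord f u0 v) \<bullet> N u0"
    unfolding sff_vec_def sff_def flat_surf_def W_def[symmetric] c ..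
  also have "\<dots> = - (DN (coord f u0 v) \<bullet> W u0)"
    using NE[OF tW, of "coord f u0 v"] by (simp add: inner_commute algebra_simps)
  finally show ?thesis unfolding W0 bf_def .
qed

end


context surf begin

lemma inner_exp:
  assumes onb: "onb_tangent f u0 a b" and v: "v \<in> tangent_space f u0" and w: "w \<in> tangent_space f u0"
  shows "v \<bullet> w = (v \<bullet> a) * (w \<bullet> a) + (v \<bullet> b) * (w \<bullet> b)"
proof -
  have aa: "a \<bullet> a = 1" and bb: "b \<bullet> b = 1" and ab: "a \<bullet> b = 0" and ba: "b \<bullet> a = 0"
    using onb unfolding onb_tangent_def by (auto simp: norm_eq_1 inner_commute)
  have "v \<bullet> w = ((v \<bullet> a) *\<^sub>R a + (v \<bullet> b) *\<^sub>R b) \<bullet> ((w \<bullet> a) *\<^sub>R a + (w \<bullet> b) *\<^sub>R b)"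
    using onb_expand[OF onb v] onb_expand[OF onb w] by metis
  also have "\<dots> = (v \<bullet> a) * (w \<bullet> a) * (a \<bullet> a) + (v \<bullet> a) * (w \<bullet> b) * (a \<bullet> b)
      + (v \<bullet> b) * (w \<bullet> a) * (b \<bullet> a) + (v \<bullet> b) * (w \<bullet> b) * (b \<bullet> b)"
    by (simp add: inner_add_left inner_add_right algebra_simps)
  finally show ?thesis using aa bb ab ba by simp
qed

lemma alg_det:
  fixes p1 q1 p2 q2 b11 b12 b21 b22 :: real
  assumes "p1^2 + q1^2 = 1" "p2^2 + q2^2 = 1" "p1*p2 + q1*q2 = 0"
  shows "(p1*p1*b11 + p1*q1*b12 + q1*p1*b21 + q1*q1*b22) * (p2*p2*b11 + p2*q2*b12 + q2*p2*b21 + q2*q2*b22)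
       - (p1*p2*b11 + p1*q2*b12 + q1*p2*b21 + q1*q2*b22) * (p2*p1*b11 + p2*q1*b12 + q2*p1*b21 + q2*q1*b22)
       = b11 * b22 - b12 * b21"
proof -
  have "(p1*q2 - q1*p2)^2 = (p1^2 + q1^2) * (p2^2 + q2^2) - (p1*p2 + q1*q2)^2"
    by (simp add: power2_eq_square algebra_simps)
  then have d: "(p1*q2 - q1*p2)^2 = 1" using assms by simp
  have "(p1*p1*b11 + p1*q1*b12 + q1*p1*b21 + q1*q1*b22) * (p2*p2*b11 + p2*q2*b12 + q2*p2*b21 + q2*q2*b22)
       - (p1*p2*b11 + p1*q2*b12 + q1*p2*b21 + q1*q2*b22) * (p2*p1*b11 + p2*q1*b12 + q2*p1*b21 + q2*q1*b22)
       = (p1*q2 - q1*p2)^2 * (b11 * b22 - b12 * b21)"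
    by (simp add: power2_eq_square algebra_simps)
  then show ?thesis using d by simp
qed

lemma alg_tr:
  fixes p1 q1 p2 q2 b11 b12 b21 b22 :: real
  assumes "p1^2 + p2^2 = 1" "q1^2 + q2^2 = 1" "p1*q1 + p2*q2 = 0"
  shows "(p1*p1*b11 + p1*q1*b12 + q1*p1*b21 + q1*q1*b22) + (p2*p2*b11 + p2*q2*b12 + q2*p2*b21 + q2*q2*b22)
       = b11 + b22"
proof -
  have "(p1*p1*b11 + p1*q1*b12 + q1*p1*b21 + q1*q1*b22) + (p2*p2*b11 + p2*q2*b12 + q2*p2*b21 + q2*q2*b22)
     = (p1^2 + p2^2) * b11 + (p1*q1 + p2*q2) * (b12 + b21) + (q1^2 + q2^2) * b22"
    by (simp add: power2_eq_square algebra_simps)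
  then show ?thesis using assms by simp
qed

lemma gauss_mean:
  assumes onb: "onb_tangent f u0 e1 e2"
  shows "gauss_curv f N u0 = bf e1 e1 * bf e2 e2 - bf e1 e2 * bf e2 e1"
    and "mean_curv f N u0 = (bf e1 e1 + bf e2 e2) / 2"
proof -
  define P where "P = (SOME (a, b). onb_tangent f u0 a b)"
  have "onb_tangent f u0 (fst P) (snd P)"
    unfolding P_def using someI_ex[of "\<lambda>p. case p of (a, b) \<Rightarrow> onb_tangent f u0 a b"] onb
    by (metis (mono_tags, lifting) case_prod_beta case_prodI)
  then obtain a b where P: "P = (a, b)" and onb2: "onb_tangent f u0 a b" by (metis prod.collapse)
  have e1: "e1 \<in> tangent_space f u0" and e2: "e2 \<in> tangent_space f u0" using onb unfolding onb_tangent_def by auto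
  have a: "a \<in> tangent_space f u0" and b: "b \<in> tangent_space f u0" using onb2 unfolding onb_tangent_def by auto
  have e11: "e1 \<bullet> e1 = 1" and e22: "e2 \<bullet> e2 = 1" and e12: "e1 \<bullet> e2 = 0"
    using onb unfolding onb_tangent_def by (auto simp: norm_eq_1)
  have a11: "a \<bullet> a = 1" and a22: "b \<bullet> b = 1" and a12: "a \<bullet> b = 0"
    using onb2 unfolding onb_tangent_def by (auto simp: norm_eq_1)
  have c1: "(a \<bullet> e1)^2 + (a \<bullet> e2)^2 = 1" using inner_exp[OF onb a a] a11 by (simp add: power2_eq_square)
  have c2: "(b \<bullet> e1)^2 + (b \<bullet> e2)^2 = 1" using inner_exp[OF onb b b] a22 by (simp add: power2_eq_square)
  have c3: "(a \<bullet> e1) * (b \<bullet> e1) + (a \<bullet> e2) * (b \<bullet> e2) = 0" using inner_exp[OF onb a b] a12 by simp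
  have d1: "(a \<bullet> e1)^2 + (b \<bullet> e1)^2 = 1" using inner_exp[OF onb2 e1 e1] e11 by (simp add: power2_eq_square inner_commute)
  have d2: "(a \<bullet> e2)^2 + (b \<bullet> e2)^2 = 1" using inner_exp[OF onb2 e2 e2] e22 by (simp add: power2_eq_square inner_commute)
  have d3: "(a \<bullet> e1) * (a \<bullet> e2) + (b \<bullet> e1) * (b \<bullet> e2) = 0" using inner_exp[OF onb2 e1 e2] e12 by (simp add: inner_commute)
  have g: "gauss_curv f N u0 = bf a a * bf b b - bf a b * bf b a"
    unfolding gauss_curv_def P_def[symmetric] P using a b by (simp add: sff_vec_bf)
  have m: "mean_curv f N u0 = (bf a a + bf b b) / 2"
    unfolding mean_curv_def P_def[symmetric] P using a b by (simp add: sff_vec_bf)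
  note ex = bf_expand[OF onb]
  show "gauss_curv f N u0 = bf e1 e1 * bf e2 e2 - bf e1 e2 * bf e2 e1"
    unfolding g ex[OF a a] ex[OF b b] ex[OF a b] ex[OF b a]
    by (rule alg_det[OF c1 c2 c3])
  show "mean_curv f N u0 = (bf e1 e1 + bf e2 e2) / 2"
    unfolding m ex[OF a a] ex[OF b b] alg_tr[OF d1 d2 d3] ..
qed

end


theorem mainTheorem2:
  fixes C X1 X2 :: "R3 \<Rightarrow> R3" and f N E1 E2 :: "R2 \<Rightarrow> R3" and U :: "R2 set" and u0 :: R2
  assumes C_smooth: "smooth_on UNIV C"
    and U_open: "open U"
    and f_smooth: "smooth_on U f"
    and f_imm: "\<forall>u\<in>U. inj (frechet_derivative f (at u))"
    and N_smooth: "smooth_on U N"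
    and N_unit: "\<forall>u\<in>U. norm (N u) = 1"
    and N_normal: "\<forall>u\<in>U. \<forall>v\<in>tangent_space f u. v \<bullet> N u = 0"
    and u0: "u0 \<in> U"
    and E1: "tangent_field f U E1" and E2: "tangent_field f U E2"
    and onb: "norm (E1 u0) = 1" "norm (E2 u0) = 1" "E1 u0 \<bullet> E2 u0 = 0"
    and X1: "smooth_on UNIV X1" "X1 (f u0) = E1 u0"
    and X2: "smooth_on UNIV X2" "X2 (f u0) = E2 u0"
  shows "sec_surf C f N E1 E2 u0
           = sec_amb C X1 X2 (f u0) + gauss_curv f N u0 - (C (f u0) \<bullet> N u0) * mean_curv f N u0"
proof -
  interpret S: surf C f N U u0
    by unfold_locales (use assms in auto)
  define e1 where "e1 = E1 u0"
  define e2 where "e2 = E2 u0"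
  define x1 where "x1 = coord f u0 e1"
  define x2 where "x2 = coord f u0 e2"
  have o: "onb_tangent f u0 e1 e2"
    unfolding onb_tangent_def e1_def e2_def using E1 E2 onb u0 unfolding tangent_field_def by auto
  have e11: "e1 \<bullet> e1 = 1" and e22: "e2 \<bullet> e2 = 1" and e12: "e1 \<bullet> e2 = 0" and e21: "e2 \<bullet> e1 = 0"
    using onb unfolding e1_def e2_def by (auto simp: norm_eq_1 inner_commute)
  have n1: "e1 \<bullet> N u0 = 0" unfolding e1_def by (rule S.tan_u0[OF E1])
  have n2: "e2 \<bullet> N u0 = 0" unfolding e2_def by (rule S.tan_u0[OF E2])
  have DNb: "\<And>v w. frechet_derivative N (at u0) (coord f u0 v) \<bullet> w = - S.bf v w"
    unfolding S.bf_def by simp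
  have hb: "\<And>E v. tangent_field f U E \<Longrightarrow> frechet_derivative E (at u0) (coord f u0 v) \<bullet> N u0 = S.bf v (E u0)"
    using S.NE unfolding S.bf_def by (metis add_eq_0_iff inner_commute)
  have G: "gauss_curv f N u0 = S.bf e1 e1 * S.bf e2 e2 - S.bf e1 e2 * S.bf e2 e1" by (rule S.gauss_mean(1)[OF o])
  have M: "mean_curv f N u0 = (S.bf e1 e1 + S.bf e2 e2) / 2" by (rule S.gauss_mean(2)[OF o])
  have A: "sec_amb C X1 X2 (f u0) = - ((frechet_derivative C (at (f u0)) e1 \<bullet> e1 - (C (f u0) \<bullet> e1) * (C (f u0) \<bullet> e1))
        + (frechet_derivative C (at (f u0)) e2 \<bullet> e2 - (C (f u0) \<bullet> e2) * (C (f u0) \<bullet> e2))) / 2"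
    unfolding sec_amb_def curv_amb_eq[OF C_smooth X1(1) X2(1) X2(1)] curv_amb_eq[OF C_smooth X2(1) X1(1) X1(1)]
      X1(2) X2(2) e1_def[symmetric] e2_def[symmetric]
    using e11 e22 e12 e21 by (simp add: inner_diff_left algebra_simps)
  have K: "sec_surf C f N E1 E2 u0 = (curv_surf C f N E1 E2 E2 u0 \<bullet> e1 + curv_surf C f N E2 E1 E1 u0 \<bullet> e2) / 2"
    unfolding sec_surf_def e1_def e2_def ..
  show ?thesis
    unfolding K A G M
    unfolding S.curv_surf_inner[OF E1 E2 E2 n1] S.curv_surf_inner[OF E2 E1 E1 n2]
    unfolding e1_def[symmetric] e2_def[symmetric] hb[OF E1] hb[OF E2] DNb
    unfolding e1_def[symmetric] e2_def[symmetric]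
    using e11 e22 e12 e21 by (simp add: algebra_simps) (simp add: field_simps)
qed


end
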